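(* Let $\langle\{a,b\},C,d,O,v,\{<,<^{-1}\}\rangle$ be a two-player infinite sequential game where $O$ is finite, $<$ is a strict linear order on $O$, player $a$ has preference $<$ and player $b$ has preference $<^{-1}$. Let $\Gamma\subseteq\mathcal{P}(C^\omega)$ and assume: (1) for all $O'\subseteq O$ and $\gamma\in C^*$, $\{\alpha\in C^\omega\mid v(\gamma\alpha)\in O'\}\in\Gamma$; (2) the win-lose game $\langle C,D,W\rangle$ is determined for all $W\in\Gamma$ and $D\subseteq C^*$. Then the game has a subgame perfect equilibrium.
   Context: $C$ is a non-empty set of choices, $d:C^*\to\{a,b\}$ assigns the chooser after each history, $v:C^\omega\to O$. A strategy of $X$ is a function $s:d^{-1}(\{X\})\to C$; a profile is identified with $\sigma:C^*\to C$. For $\gamma\in C^*$, the play $p^\gamma(\sigma)$ is given by $p_n=\gamma_n$ for $n<|\gamma|$ and $p_n=\sigma(p_{<n})$ otherwise. $\sigma$ is a subgame perfect equilibrium if there are no $\gamma\in C^*$, player $X$ and strategy $s$ of $X$ with $v(p^\gamma(\sigma))\prec_X v(p^\gamma(\sigma_{X\mapsto s}))$, where $\prec_a={<}$, $\prec_b={<^{-1}}$ and $\sigma_{X\mapsto s}$ agrees with $s$ on $d^{-1}(\{X\})$ and with $\sigma$ elsewhere. The win-lose game $\langle C,D,W\rangle$ is the two-player game where the first player chooses after histories in $D$, the second after histories in $C^*\setminus D$, and the first player wins iff the play lies in $W$; it is determined if one player has a winning strategy. *)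

theory Defs
  imports Main
begin

datatype player = PA | PB

text \<open>Finite histories are lists over the choice type 'c; infinite plays are nat => 'c.
  The choice set C is the (nonempty) type 'c.\<close>

fun play_prefix :: "'c list \<Rightarrow> ('c list \<Rightarrow> 'c) \<Rightarrow> nat \<Rightarrow> 'c list" where
  "play_prefix \<gamma> \<sigma> 0 = []"
| "play_prefix \<gamma> \<sigma> (Suc n) =
     play_prefix \<gamma> \<sigma> n @ [if n < length \<gamma> then \<gamma> ! n else \<sigma> (play_prefix \<gamma> \<sigma> n)]"

definition play :: "'c list \<Rightarrow> ('c list \<Rightarrow> 'c) \<Rightarrow> nat \<Rightarrow> 'c" where
  "play \<gamma> \<sigma> n = (if n < length \<gamma> then \<gamma> ! n else \<sigma> (play_prefix \<gamma> \<sigma> n))"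

definition conc :: "'c list \<Rightarrow> (nat \<Rightarrow> 'c) \<Rightarrow> nat \<Rightarrow> 'c" where
  "conc \<gamma> \<alpha> n = (if n < length \<gamma> then \<gamma> ! n else \<alpha> (n - length \<gamma>))"

definition upd_profile :: "('c list \<Rightarrow> player) \<Rightarrow> ('c list \<Rightarrow> 'c) \<Rightarrow> player \<Rightarrow> ('c list \<Rightarrow> 'c) \<Rightarrow> 'c list \<Rightarrow> 'c" where
  "upd_profile d \<sigma> X s = (\<lambda>h. if d h = X then s h else \<sigma> h)"

fun prefers :: "player \<Rightarrow> 'o::linorder \<Rightarrow> 'o \<Rightarrow> bool" where
  "prefers PA x y = (x < y)"
| "prefers PB x y = (y < x)"

definition SPE :: "('c list \<Rightarrow> player) \<Rightarrow> ((nat \<Rightarrow> 'c) \<Rightarrow> 'o::linorder) \<Rightarrow> ('c list \<Rightarrow> 'c) \<Rightarrow> bool" where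
  "SPE d v \<sigma> \<longleftrightarrow> \<not> (\<exists>\<gamma> X s. prefers X (v (play \<gamma> \<sigma>)) (v (play \<gamma> (upd_profile d \<sigma> X s))))"

definition wl_play :: "'c list set \<Rightarrow> ('c list \<Rightarrow> 'c) \<Rightarrow> ('c list \<Rightarrow> 'c) \<Rightarrow> nat \<Rightarrow> 'c" where
  "wl_play D s1 s2 = play [] (\<lambda>h. if h \<in> D then s1 h else s2 h)"

definition wl_determined :: "'c list set \<Rightarrow> (nat \<Rightarrow> 'c) set \<Rightarrow> bool" where
  "wl_determined D W \<longleftrightarrow>
     (\<exists>s1. \<forall>s2. wl_play D s1 s2 \<in> W) \<or> (\<exists>s2. \<forall>s1. wl_play D s1 s2 \<notin> W)"

end

theory Submission
  imports Defs
begin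

definition pref :: "(nat \<Rightarrow> 'c) \<Rightarrow> nat \<Rightarrow> 'c list" where
  "pref p n = map p [0..<n]"

definition consis :: "('c list \<Rightarrow> player) \<Rightarrow> player \<Rightarrow> ('c list \<Rightarrow> 'c) \<Rightarrow> 'c list \<Rightarrow> (nat \<Rightarrow> 'c) \<Rightarrow> bool" where
  "consis d X s \<gamma> p \<longleftrightarrow> pref p (length \<gamma>) = \<gamma> \<and>
     (\<forall>n\<ge>length \<gamma>. d (pref p n) = X \<longrightarrow> p n = s (pref p n))"

lemma pref_0[simp]: "pref p 0 = []"
  by (simp add: pref_def)

lemma pref_Suc[simp]: "pref p (Suc n) = pref p n @ [p n]"
  by (simp add: pref_def)

lemma length_pref[simp]: "length (pref p n) = n"
  by (simp add: pref_def)

lemma nth_pref[simp]: "k < n \<Longrightarrow> pref p n ! k = p k"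
  by (simp add: pref_def)

lemma take_pref: "k \<le> n \<Longrightarrow> take k (pref p n) = pref p k"
  by (simp add: pref_def take_map)

lemma pref_eq_nth: "pref p m = pref q m \<Longrightarrow> k < m \<Longrightarrow> p k = q k"
  by (metis nth_pref)

lemma pref_eq_le: "pref p m = pref q m \<Longrightarrow> k \<le> m \<Longrightarrow> pref p k = pref q k"
  by (metis take_pref)

lemma pref_add: "pref p (m + n) = pref p m @ pref (\<lambda>i. p (i + m)) n"
  by (induction n) (auto simp: add.commute)

lemma play_prefix_pref: "play_prefix \<gamma> \<sigma> n = pref (play \<gamma> \<sigma>) n"
  by (induction n) (auto simp: play_def)

lemma play_char: "pref (play \<gamma> \<sigma>) (length \<gamma>) = \<gamma>"
  "n \<ge> length \<gamma> \<Longrightarrow> play \<gamma> \<sigma> n = \<sigma> (pref (play \<gamma> \<sigma>) n)"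
  by (auto intro!: nth_equalityI simp: play_def play_prefix_pref)

lemma play_cons: "(\<And>h. d h = Y \<Longrightarrow> \<sigma> h = f h) \<Longrightarrow> consis d Y f \<gamma> (play \<gamma> \<sigma>)"
  unfolding consis_def using play_char by metis

lemma uniq:
  assumes "pref p m = pref q m" "\<And>n. n \<ge> m \<Longrightarrow> p n = \<sigma> (pref p n)"
    "\<And>n. n \<ge> m \<Longrightarrow> q n = \<sigma> (pref q n)"
  shows "p = q"
proof -
  have "pref p n = pref q n" for n
  proof (induction n)
    case 0 then show ?case by (simp add: pref_def)
  next
    case (Suc n)
    have "p n = q n"
    proof (cases "n < m")
      case True then show ?thesis using assms(1) pref_eq_nth by metis
    next
      case False then show ?thesis using assms(2,3) Suc by simp
    qed
    then show ?case using Suc by simp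
  qed
  then show ?thesis by (metis lessI pref_eq_nth ext)
qed

lemma play_uniq: "(\<And>n. p n = \<sigma> (pref p n)) \<Longrightarrow> p = play [] \<sigma>"
  by (rule uniq[where m=0 and \<sigma>=\<sigma>]) (auto simp: pref_def play_char)

lemma determ:
  fixes v :: "(nat \<Rightarrow> 'c) \<Rightarrow> 'o::linorder"
  assumes "\<forall>O' :: 'o set. \<forall>\<gamma>. {\<alpha>. v (conc \<gamma> \<alpha>) \<in> O'} \<in> \<Gamma>"
    and "\<forall>W \<in> \<Gamma>. \<forall>D. wl_determined D W"
  shows "(\<exists>s. \<forall>p. consis d PA s \<gamma> p \<longrightarrow> ot \<le> v p) \<or> (\<exists>s. \<forall>p. consis d PB s \<gamma> p \<longrightarrow> \<not> ot \<le> v p)"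
proof -
  define W where "W = {\<alpha>. v (conc \<gamma> \<alpha>) \<in> {x. ot \<le> x}}"
  define D where "D = {h. d (\<gamma> @ h) = PA}"
  have "W \<in> \<Gamma>" using assms(1) unfolding W_def by blast
  then have "wl_determined D W" using assms(2) by blast
  have key: "p = conc \<gamma> (\<lambda>n. p (n + length \<gamma>)) \<and> (\<forall>n. \<gamma> @ pref (\<lambda>n. p (n + length \<gamma>)) n = pref p (length \<gamma> + n))"
    if "pref p (length \<gamma>) = \<gamma>" for p
  proof -
    have "p = conc \<gamma> (\<lambda>n. p (n + length \<gamma>))"
    proof
      fix n show "p n = conc \<gamma> (\<lambda>n. p (n + length \<gamma>)) n"
        using that nth_pref[of n "length \<gamma>" p] by (auto simp: conc_def)
    qed
    then show ?thesis using pref_add[of p "length \<gamma>"] that by simp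
  qed
  show ?thesis
    using \<open>wl_determined D W\<close> unfolding wl_determined_def
  proof
    assume "\<exists>s1. \<forall>s2. wl_play D s1 s2 \<in> W"
    then obtain s1 where s1: "\<And>s2. wl_play D s1 s2 \<in> W" by blast
    have "\<forall>p. consis d PA (\<lambda>h. s1 (drop (length \<gamma>) h)) \<gamma> p \<longrightarrow> ot \<le> v p"
    proof (intro allI impI)
      fix p assume c: "consis d PA (\<lambda>h. s1 (drop (length \<gamma>) h)) \<gamma> p"
      define \<alpha> where "\<alpha> n = p (n + length \<gamma>)" for n
      have k: "p = conc \<gamma> \<alpha>" "\<And>n. \<gamma> @ pref \<alpha> n = pref p (length \<gamma> + n)"
        using key[of p] c unfolding consis_def \<alpha>_def by auto
      have "\<alpha> = wl_play D s1 (\<lambda>h. \<alpha> (length h))"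
        unfolding wl_play_def
      proof (rule play_uniq)
        fix n
        show "\<alpha> n = (if pref \<alpha> n \<in> D then s1 (pref \<alpha> n) else \<alpha> (length (pref \<alpha> n)))"
        proof (cases "pref \<alpha> n \<in> D")
          case True
          have e: "pref p (length \<gamma> + n) = \<gamma> @ pref \<alpha> n" using k(2) by simp
          have "d (pref p (length \<gamma> + n)) = PA" using True by (simp add: D_def e)
          then have "p (length \<gamma> + n) = s1 (drop (length \<gamma>) (pref p (length \<gamma> + n)))"
            using c unfolding consis_def by auto
          then show ?thesis using True unfolding e by (simp add: \<alpha>_def add.commute)
        qed simp
      qed
      then have "\<alpha> \<in> W" using s1 by metis
      then show "ot \<le> v p" using k W_def by simp
    qed
    then show ?thesis by blast
  next
    assume "\<exists>s2. \<forall>s1. wl_play D s1 s2 \<notin> W"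
    then obtain s2 where s2: "\<And>s1. wl_play D s1 s2 \<notin> W" by blast
    have "\<forall>p. consis d PB (\<lambda>h. s2 (drop (length \<gamma>) h)) \<gamma> p \<longrightarrow> \<not> ot \<le> v p"
    proof (intro allI impI)
      fix p assume c: "consis d PB (\<lambda>h. s2 (drop (length \<gamma>) h)) \<gamma> p"
      define \<alpha> where "\<alpha> n = p (n + length \<gamma>)" for n
      have k: "p = conc \<gamma> \<alpha>" "\<And>n. \<gamma> @ pref \<alpha> n = pref p (length \<gamma> + n)"
        using key[of p] c unfolding consis_def \<alpha>_def by auto
      have "\<alpha> = wl_play D (\<lambda>h. \<alpha> (length h)) s2"
        unfolding wl_play_def
      proof (rule play_uniq)
        fix n
        show "\<alpha> n = (if pref \<alpha> n \<in> D then \<alpha> (length (pref \<alpha> n)) else s2 (pref \<alpha> n))"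
        proof (cases "pref \<alpha> n \<in> D")
          case False
          have e: "pref p (length \<gamma> + n) = \<gamma> @ pref \<alpha> n" using k(2) by simp
          have "d (pref p (length \<gamma> + n)) = PB" using False
            by (cases "d (pref p (length \<gamma> + n))") (simp_all add: D_def e)
          then have "p (length \<gamma> + n) = s2 (drop (length \<gamma>) (pref p (length \<gamma> + n)))"
            using c unfolding consis_def by auto
          then show ?thesis using False unfolding e by (simp add: \<alpha>_def add.commute)
        qed simp
      qed
      then have "\<alpha> \<notin> W" using s2 by metis
      then show "\<not> ot \<le> v p" using k W_def by simp
    qed
    then show ?thesis by blast
  qed
qed

fun anc_r :: "player \<Rightarrow> ('c list \<Rightarrow> player) \<Rightarrow> ('c list \<Rightarrow> 'o) \<Rightarrow> ('c list \<Rightarrow> 'c list \<Rightarrow> 'c) \<Rightarrow> 'c list \<Rightarrow> 'c list" where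
  "anc_r X d val S [] = []"
| "anc_r X d val S (c # r) = (let h = rev r; g = anc_r X d val S r in
     if val (h @ [c]) \<noteq> val g \<or> (d h = X \<and> c \<noteq> S g h) then h @ [c] else g)"

definition anc where "anc X d val S h = anc_r X d val S (rev h)"

lemma anc_Nil[simp]: "anc X d val S [] = []"
  by (simp add: anc_def)

lemma anc_snoc: "anc X d val S (h @ [c]) =
   (if val (h @ [c]) \<noteq> val (anc X d val S h) \<or> (d h = X \<and> c \<noteq> S (anc X d val S h) h)
    then h @ [c] else anc X d val S h)"
  by (simp add: anc_def Let_def)

lemma anc_props:
  "take (length (anc X d val S h)) h = anc X d val S h \<and> length (anc X d val S h) \<le> length h \<and>
   val (anc X d val S h) = val h \<and>
   (\<forall>k. length (anc X d val S h) \<le> k \<and> k < length h \<and> d (take k h) = X \<longrightarrow>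
      h ! k = S (anc X d val S h) (take k h))"
proof (induction h rule: rev_induct)
  case Nil then show ?case by simp
next
  case (snoc c h)
  let ?g = "anc X d val S h"
  show ?case
  proof (cases "val (h @ [c]) \<noteq> val ?g \<or> (d h = X \<and> c \<noteq> S ?g h)")
    case True then show ?thesis by (auto simp: anc_snoc)
  next
    case False
    have a: "anc X d val S (h @ [c]) = ?g" by (rule trans[OF anc_snoc if_not_P[OF False]])
    have "\<forall>k. length ?g \<le> k \<and> k < length (h @ [c]) \<and> d (take k (h @ [c])) = X \<longrightarrow>
      (h @ [c]) ! k = S ?g (take k (h @ [c]))"
    proof (intro allI impI)
      fix k assume k: "length ?g \<le> k \<and> k < length (h @ [c]) \<and> d (take k (h @ [c])) = X"
      show "(h @ [c]) ! k = S ?g (take k (h @ [c]))"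
      proof (cases "k < length h")
        case True then show ?thesis using snoc k by (simp add: nth_append)
      next
        case False then have "k = length h" using k by simp
        then show ?thesis using k \<open>\<not> (val (h @ [c]) \<noteq> val ?g \<or> (d h = X \<and> c \<noteq> S ?g h))\<close> by auto
      qed
    qed
    then show ?thesis using snoc False a by simp
  qed
qed

lemma pref_rel_facts:
  fixes X :: player and a b c :: "'o::linorder"
  shows "\<not> prefers X a a" "prefers X a b \<Longrightarrow> \<not> prefers X b a"
   "a \<noteq> b \<Longrightarrow> prefers X a b \<or> prefers X b a"
   "\<not> prefers X a b \<Longrightarrow> \<not> prefers X b c \<Longrightarrow> \<not> prefers X a c"
   "prefers X a b \<Longrightarrow> prefers X b c \<Longrightarrow> prefers X a c"
  by (cases X; auto)+

lemma card_better:
  fixes X :: player and a b :: "'o::linorder"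
  assumes "finite (UNIV :: 'o set)" "prefers X a b"
  shows "card {x. prefers X b x} < card {x. prefers X a x}"
proof (rule psubset_card_mono)
  show "finite {x. prefers X a x}" using assms(1) by (rule finite_subset[rotated]) simp
  show "{x. prefers X b x} \<subset> {x. prefers X a x}"
    using assms(2) pref_rel_facts(1,5)[of X] by blast
qed

lemma uniform:
  fixes X :: player and val :: "'c list \<Rightarrow> 'o::linorder" and v :: "(nat \<Rightarrow> 'c) \<Rightarrow> 'o"
  assumes fin: "finite (UNIV::'o set)"
    and win: "\<And>\<gamma>. \<exists>s. \<forall>p. consis d X s \<gamma> p \<longrightarrow> \<not> prefers X (v p) (val \<gamma>)"
    and maxim: "\<And>h ot s. (\<forall>p. consis d X s h p \<longrightarrow> \<not> prefers X (v p) ot) \<Longrightarrow> \<not> prefers X (val h) ot"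
  shows "\<exists>f. \<forall>\<gamma> p. consis d X f \<gamma> p \<longrightarrow> \<not> prefers X (v p) (val \<gamma>)"
proof -
  have "\<forall>\<gamma>. \<exists>s. \<forall>p. consis d X s \<gamma> p \<longrightarrow> \<not> prefers X (v p) (val \<gamma>)" using win by blast
  then have "\<exists>S. \<forall>\<gamma>. \<forall>p. consis d X (S \<gamma>) \<gamma> p \<longrightarrow> \<not> prefers X (v p) (val \<gamma>)" by (rule choice)
  then obtain S where S: "\<And>\<gamma> p. consis d X (S \<gamma>) \<gamma> p \<Longrightarrow> \<not> prefers X (v p) (val \<gamma>)" by blast
  define A where "A h = anc X d val S h" for h
  define f where "f h = S (A h) h" for h
  show ?thesis
  proof (intro exI allI impI)
    fix \<gamma> p assume c: "consis d X f \<gamma> p"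
    define n0 where "n0 = length \<gamma>"
    define A' where "A' n = A (pref p n)" for n
    have cp: "pref p n0 = \<gamma>" and cs: "\<And>n. n \<ge> n0 \<Longrightarrow> d (pref p n) = X \<Longrightarrow> p n = S (A' n) (pref p n)"
      using c unfolding consis_def n0_def f_def A'_def by auto
    have AP: "take (length (A' n)) (pref p n) = A' n" "length (A' n) \<le> n" "val (A' n) = val (pref p n)"
      "\<And>k. length (A' n) \<le> k \<Longrightarrow> k < n \<Longrightarrow> d (pref p k) = X \<Longrightarrow> p k = S (A' n) (pref p k)" for n
      using anc_props[of X d val S "pref p n"] unfolding A'_def A_def by (auto simp: take_pref)
    have stp: "A' (Suc n) = A' n \<or> prefers X (val (A' n)) (val (A' (Suc n)))" if n: "n \<ge> n0" for n
    proof (cases "A' (Suc n) = A' n")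
      case False
      let ?g = "A' n"
      have nd: "\<not> (d (pref p n) = X \<and> p n \<noteq> S ?g (pref p n))" using cs n by auto
      have A1: "A' (Suc n) = pref p (Suc n)" and vne: "val (pref p (Suc n)) \<noteq> val ?g"
        using False nd anc_snoc[of X d val S "pref p n" "p n"] unfolding A'_def A_def
        by (auto split: if_splits)
      have "\<not> prefers X (val (pref p (Suc n))) (val ?g)"
      proof (rule maxim[where s="S ?g"], intro allI impI)
        fix q assume cq: "consis d X (S ?g) (pref p (Suc n)) q"
        have qe: "pref q (Suc n) = pref p (Suc n)" using cq unfolding consis_def by simp
        have "consis d X (S ?g) ?g q"
          unfolding consis_def
        proof (intro conjI allI impI)
          have "pref q (length ?g) = pref p (length ?g)" using qe AP(2)[of n] pref_eq_le[of q "Suc n" p "length ?g"] by simp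
          then show "pref q (length ?g) = ?g" using AP(1)[of n] AP(2)[of n] by (simp add: take_pref)
        next
          fix k assume k: "length ?g \<le> k" "d (pref q k) = X"
          show "q k = S ?g (pref q k)"
          proof (cases "k \<le> n")
            case True
            have e1: "pref q k = pref p k" using qe True pref_eq_le by (metis le_SucI)
            have e2: "q k = p k" using qe True pref_eq_nth by (metis le_imp_less_Suc)
            show ?thesis
            proof (cases "k < n")
              case True then show ?thesis using AP(4)[of n k] k e1 e2 by simp
            next
              case False then have "k = n" using \<open>k \<le> n\<close> by simp
              then show ?thesis using cs[of n] n k e1 e2 by simp
            qed
          next
            case False then show ?thesis using cq k unfolding consis_def by simp
          qed
        qed
        then show "\<not> prefers X (v q) (val ?g)" by (rule S)
      qed
      then show ?thesis using vne pref_rel_facts(3)[of "val ?g" "val (pref p (Suc n))" X] A1 by auto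
    qed simp
    define \<mu> where "\<mu> n = card {x. prefers X (val (A' n)) x}" for n
    have mono: "\<mu> (Suc n) \<le> \<mu> n" "A' (Suc n) \<noteq> A' n \<Longrightarrow> \<mu> (Suc n) < \<mu> n" if "n \<ge> n0" for n
      using stp[OF that] card_better[OF fin, of X "val (A' n)" "val (A' (Suc n))"] unfolding \<mu>_def
      by (auto intro: less_imp_le)
    have ge: "\<not> prefers X (val (A' n)) (val \<gamma>)" if "n \<ge> n0" for n
      using that
    proof (induction n rule: dec_induct)
      case base then show ?case using AP(3)[of n0] cp pref_rel_facts(1) by simp
    next
      case (step m)
      then show ?case using stp[of m] pref_rel_facts(2,4) by metis
    qed
    define M where "M = (LEAST y. \<exists>m\<ge>n0. \<mu> m = y)"
    obtain N where N: "N \<ge> n0" "\<mu> N = M"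
      using LeastI_ex[of "\<lambda>y. \<exists>m\<ge>n0. \<mu> m = y"] unfolding M_def by blast
    have Mle: "M \<le> \<mu> m" if "m \<ge> n0" for m unfolding M_def using that by (blast intro: Least_le)
    have mle: "\<mu> m \<le> \<mu> N" if "m \<ge> N" for m
      using that
    proof (induction m rule: dec_induct)
      case (step m) then show ?case using mono(1)[of m] N(1) by simp
    qed simp
    have const: "A' m = A' N" if "m \<ge> N" for m
      using that
    proof (induction m rule: dec_induct)
      case (step m)
      have "A' (Suc m) = A' m"
      proof (rule ccontr)
        assume "A' (Suc m) \<noteq> A' m"
        then have "\<mu> (Suc m) < \<mu> m" using mono(2)[of m] step N(1) by simp
        moreover have "\<mu> m \<le> \<mu> N" using mle step by simp
        moreover have "M \<le> \<mu> (Suc m)" using Mle step N(1) by simp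
        ultimately show False using N(2) by simp
      qed
      then show ?case using step by simp
    qed simp
    define g where "g = A' N"
    have "consis d X (S g) g p"
      unfolding consis_def
    proof (intro conjI allI impI)
      show "pref p (length g) = g" using AP(1)[of N] AP(2)[of N] unfolding g_def by (simp add: take_pref)
    next
      fix k assume k: "length g \<le> k" "d (pref p k) = X"
      show "p k = S g (pref p k)"
      proof (cases "k < N")
        case True then show ?thesis using AP(4)[of N k] k unfolding g_def by simp
      next
        case False then show ?thesis using cs[of k] N(1) const[of k] k unfolding g_def by simp
      qed
    qed
    then have "\<not> prefers X (v p) (val g)" by (rule S)
    then show "\<not> prefers X (v p) (val \<gamma>)" using ge[OF N(1)] pref_rel_facts(4) unfolding g_def by metis
  qed
qed

theorem theorem24:
  fixes d :: "'c list \<Rightarrow> player"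
    and v :: "(nat \<Rightarrow> 'c) \<Rightarrow> 'o::linorder"
    and \<Gamma> :: "(nat \<Rightarrow> 'c) set set"
  assumes "finite (UNIV :: 'o set)"
    and "\<forall>O' :: 'o set. \<forall>\<gamma>. {\<alpha>. v (conc \<gamma> \<alpha>) \<in> O'} \<in> \<Gamma>"
    and "\<forall>W \<in> \<Gamma>. \<forall>D. wl_determined D W"
  shows "\<exists>\<sigma>. SPE d v \<sigma>"
proof -
  note fin = assms(1)
  note det = determ[OF assms(2,3), of d]
  define G where "G \<gamma> = {ot. \<exists>s. \<forall>p. consis d PA s \<gamma> p \<longrightarrow> ot \<le> v p}" for \<gamma>
  define val where "val \<gamma> = Max (G \<gamma>)" for \<gamma>
  have Gfin: "finite (G \<gamma>)" for \<gamma> using fin by (rule finite_subset[rotated]) simp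
  have Gne: "Min UNIV \<in> G \<gamma>" for \<gamma> unfolding G_def using fin by auto
  have valin: "val \<gamma> \<in> G \<gamma>" for \<gamma> unfolding val_def using Gfin Gne by (metis Max_in empty_iff)
  have valge: "ot \<in> G \<gamma> \<Longrightarrow> ot \<le> val \<gamma>" for ot \<gamma> unfolding val_def using Gfin by simp
  have "\<exists>f. \<forall>\<gamma> p. consis d PA f \<gamma> p \<longrightarrow> \<not> prefers PA (v p) (val \<gamma>)"
  proof (rule uniform[OF fin])
    fix \<gamma> show "\<exists>s. \<forall>p. consis d PA s \<gamma> p \<longrightarrow> \<not> prefers PA (v p) (val \<gamma>)"
      using valin[of \<gamma>] unfolding G_def by (auto simp: not_less)
  next
    fix h ot s assume "\<forall>p. consis d PA s h p \<longrightarrow> \<not> prefers PA (v p) ot"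
    then have "ot \<in> G h" unfolding G_def by (auto simp: not_less)
    then show "\<not> prefers PA (val h) ot" using valge by (simp add: not_less)
  qed
  then obtain fA where fA: "\<And>\<gamma> p. consis d PA fA \<gamma> p \<Longrightarrow> \<not> v p < val \<gamma>" by auto
  have comb: "\<exists>p. consis d PA s h p \<and> consis d PB t h p" for s t h
    by (rule exI[of _ "play h (\<lambda>x. if d x = PA then s x else t x)"]) (auto intro: play_cons)
  have "\<exists>f. \<forall>\<gamma> p. consis d PB f \<gamma> p \<longrightarrow> \<not> prefers PB (v p) (val \<gamma>)"
  proof (rule uniform[OF fin])
    fix \<gamma> show "\<exists>s. \<forall>p. consis d PB s \<gamma> p \<longrightarrow> \<not> prefers PB (v p) (val \<gamma>)"
    proof (cases "\<exists>x. val \<gamma> < x")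
      case False then show ?thesis by auto
    next
      case True
      define o' where "o' = Min {x. val \<gamma> < x}"
      have fo: "finite {x. val \<gamma> < x}" using fin by (rule finite_subset[rotated]) simp
      have o'g: "val \<gamma> < o'" unfolding o'_def using Min_in[OF fo] True by auto
      have o'le: "val \<gamma> < x \<Longrightarrow> o' \<le> x" for x unfolding o'_def using fo by simp
      have "\<not> (\<exists>s. \<forall>p. consis d PA s \<gamma> p \<longrightarrow> o' \<le> v p)"
      proof
        assume "\<exists>s. \<forall>p. consis d PA s \<gamma> p \<longrightarrow> o' \<le> v p"
        then have "o' \<in> G \<gamma>" unfolding G_def by blast
        then show False using valge o'g by fastforce
      qed
      then obtain s where s: "\<And>p. consis d PB s \<gamma> p \<Longrightarrow> \<not> o' \<le> v p" using det[of \<gamma> o'] by blast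
      show ?thesis
        by (rule exI[of _ s]) (use s o'le in fastforce)
    qed
  next
    fix h ot t assume t: "\<forall>p. consis d PB t h p \<longrightarrow> \<not> prefers PB (v p) ot"
    obtain s where s: "\<And>p. consis d PA s h p \<Longrightarrow> val h \<le> v p" using valin[of h] unfolding G_def by blast
    obtain p where "consis d PA s h p" "consis d PB t h p" using comb by blast
    then show "\<not> prefers PB (val h) ot" using s t by fastforce
  qed
  then obtain fB where fB: "\<And>\<gamma> p. consis d PB fB \<gamma> p \<Longrightarrow> \<not> val \<gamma> < v p" by auto
  define \<sigma> where "\<sigma> h = (if d h = PA then fA h else fB h)" for h
  have "SPE d v \<sigma>"
    unfolding SPE_def
  proof (clarify)
    fix \<gamma> X s
    assume pr: "prefers X (v (play \<gamma> \<sigma>)) (v (play \<gamma> (upd_profile d \<sigma> X s)))"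
    have "consis d PA fA \<gamma> (play \<gamma> \<sigma>)" "consis d PB fB \<gamma> (play \<gamma> \<sigma>)"
      by (auto intro!: play_cons simp: \<sigma>_def)
    then have eq: "v (play \<gamma> \<sigma>) = val \<gamma>" using fA fB by (meson antisym_conv3)
    show False
    proof (cases X)
      case PA
      then have "consis d PB fB \<gamma> (play \<gamma> (upd_profile d \<sigma> X s))"
        by (auto intro!: play_cons simp: \<sigma>_def upd_profile_def)
      then show False using fB pr eq PA by fastforce
    next
      case PB
      then have "consis d PA fA \<gamma> (play \<gamma> (upd_profile d \<sigma> X s))"
        by (auto intro!: play_cons simp: \<sigma>_def upd_profile_def)
      then show False using fA pr eq PB by fastforce
    qed
  qed
  then show ?thesis by blast
qed

end
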